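(* Let $\alpha>0$, $t_0>0$ and $x_0,v_0\in\mathcal H$. Assume $(u(\cdot),v(\cdot)):[t_0,+\infty)\to\mathcal H\times\mathcal H$ is absolutely continuous on every compact subinterval and solves the differential inclusion $$(\dot u(t),\dot v(t))\in G(t,u(t),v(t))\ \text{ for almost all }t>t_0,\qquad (u(t_0),v(t_0))=(x_0,v_0),$$ where $G(t,u,v)=\{v\}\times\big(-\frac{\alpha}{t}v-\arg\min_{g\in C(u)}\langle g,-v\rangle\big)$. Then $x(t):=u(t)$ satisfies $$\tfrac{\alpha}{t}\dot x(t)+\operatorname{proj}_{C(x(t))+\ddot x(t)}(0)=0$$ for almost all $t\in[t_0,+\infty)$, where $\dot x=v$ and $\ddot x=\dot v$, together with $x(t_0)=x_0$ and $\dot x(t_0)=v_0$.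
   Context: $\mathcal H$ is a real Hilbert space. $f_1,\dots,f_m:\mathcal H\to\mathbb R$ are convex and continuously differentiable. $C(u)=\operatorname{co}\{\nabla f_i(u):i=1,\dots,m\}$. For a closed convex $K$, $\operatorname{proj}_K(y)=\arg\min_{w\in K}\|w-y\|^2$. *)

theory Defs
  imports "HOL-Analysis.Analysis"
begin

definition abs_continuous_on :: "real \<Rightarrow> real \<Rightarrow> (real \<Rightarrow> 'a::real_normed_vector) \<Rightarrow> bool" where
  "abs_continuous_on a b f \<longleftrightarrow>
     (\<forall>\<epsilon>>0. \<exists>\<delta>>0. \<forall>(n::nat) (l::nat \<Rightarrow> real) (r::nat \<Rightarrow> real).
        (\<forall>k<n. a \<le> l k \<and> l k \<le> r k \<and> r k \<le> b) \<longrightarrow>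
        (\<forall>j<n. \<forall>k<n. j \<noteq> k \<longrightarrow> {l j<..<r j} \<inter> {l k<..<r k} = {}) \<longrightarrow>
        (\<Sum>k<n. r k - l k) < \<delta> \<longrightarrow>
        (\<Sum>k<n. norm (f (r k) - f (l k))) < \<epsilon>)"

definition argmin_set :: "('a \<Rightarrow> real) \<Rightarrow> 'a set \<Rightarrow> 'a set" where
  "argmin_set \<phi> K = {g \<in> K. \<forall>h\<in>K. \<phi> g \<le> \<phi> h}"

definition proj :: "'a::real_inner set \<Rightarrow> 'a \<Rightarrow> 'a" where
  "proj K y = (THE w. w \<in> K \<and> (\<forall>z\<in>K. (norm (w - y))\<^sup>2 \<le> (norm (z - y))\<^sup>2))"

text \<open>C(u) = co{grad f_i(u) : i = 1..m}, indices shifted to 0..m-1.\<close>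
definition Cset :: "nat \<Rightarrow> (nat \<Rightarrow> 'a \<Rightarrow> 'a::real_inner) \<Rightarrow> 'a \<Rightarrow> 'a set" where
  "Cset m grad u = convex hull {grad i u | i. i < m}"

definition Gsecond :: "real \<Rightarrow> nat \<Rightarrow> (nat \<Rightarrow> 'a \<Rightarrow> 'a::real_inner) \<Rightarrow> real \<Rightarrow> 'a \<Rightarrow> 'a \<Rightarrow> 'a set" where
  "Gsecond \<alpha> m grad t u v =
     (\<lambda>g. - (\<alpha> / t) *\<^sub>R v - g) ` argmin_set (\<lambda>g. inner g (- v)) (Cset m grad u)"

end

theory Submission
  imports Defs
begin

lemma proj_key:
  fixes C :: "'a::real_inner set" and vv g :: 'a and c :: real
  assumes c: "c > 0" and gC: "g \<in> C" and gmin: "\<forall>h\<in>C. inner g (- vv) \<le> inner h (- vv)"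
  shows "c *\<^sub>R vv + proj ((\<lambda>x. x + (- c *\<^sub>R vv - g)) ` C) 0 = 0"
proof -
  define w where "w = - c *\<^sub>R vv - g"
  define p where "p = - c *\<^sub>R vv"
  have pw: "p = g + w" unfolding p_def w_def by simp
  have ineq: "inner p (h - g) \<ge> 0" if "h \<in> C" for h
  proof -
    have "inner g (- vv) \<le> inner h (- vv)" using gmin that by blast
    hence "0 \<le> inner (h - g) (- vv)" by (simp add: inner_diff_left)
    hence "0 \<le> c * inner (h - g) (- vv)" using c by (metis less_le mult_nonneg_nonneg)
    thus ?thesis unfolding p_def by (simp add: inner_commute)
  qed
  have expand: "(norm (p + d))\<^sup>2 = (norm p)\<^sup>2 + 2 * inner p d + (norm d)\<^sup>2" for d :: 'a
    by (simp add: power2_norm_eq_inner inner_add_left inner_add_right inner_commute)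
  have mem: "p \<in> (\<lambda>x. x + w) ` C" using gC pw by auto
  have minp: "\<forall>z\<in>(\<lambda>x. x + w) ` C. (norm (p - 0))\<^sup>2 \<le> (norm (z - 0))\<^sup>2"
  proof
    fix z assume "z \<in> (\<lambda>x. x + w) ` C"
    then obtain h where h: "h \<in> C" "z = h + w" by auto
    have "z = p + (h - g)" using h pw by simp
    hence "(norm z)\<^sup>2 = (norm p)\<^sup>2 + 2 * inner p (h - g) + (norm (h - g))\<^sup>2" using expand by simp
    thus "(norm (p - 0))\<^sup>2 \<le> (norm (z - 0))\<^sup>2" using ineq[OF h(1)] by simp
  qed
  have uniq: "q = p" if q: "q \<in> (\<lambda>x. x + w) ` C" "\<forall>z\<in>(\<lambda>x. x + w) ` C. (norm (q - 0))\<^sup>2 \<le> (norm (z - 0))\<^sup>2" for q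
  proof -
    obtain h where h: "h \<in> C" "q = h + w" using q(1) by auto
    have "q = p + (h - g)" using h pw by simp
    hence e: "(norm q)\<^sup>2 = (norm p)\<^sup>2 + 2 * inner p (h - g) + (norm (h - g))\<^sup>2" using expand by simp
    have "(norm q)\<^sup>2 \<le> (norm p)\<^sup>2" using q(2) mem by auto
    hence "(norm (h - g))\<^sup>2 \<le> 0" using e ineq[OF h(1)] by linarith
    hence "h = g" by simp
    thus ?thesis using h pw by simp
  qed
  have "proj ((\<lambda>x. x + w) ` C) 0 = p"
    unfolding proj_def
    apply (rule the_equality)
    using mem minp apply blast
    using uniq by blast
  thus ?thesis unfolding w_def p_def by simp
qed

theorem theorem3p9:
  fixes f :: "nat \<Rightarrow> 'a::{real_inner, complete_space} \<Rightarrow> real"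
    and grad :: "nat \<Rightarrow> 'a \<Rightarrow> 'a"
    and m :: nat
    and \<alpha> t0 :: real
    and x0 v0 :: 'a
    and u v :: "real \<Rightarrow> 'a"
  assumes convex_f: "\<And>i. i < m \<Longrightarrow> convex_on UNIV (f i)"
    and grad_f: "\<And>i x. i < m \<Longrightarrow> (f i has_derivative (\<lambda>h. inner (grad i x) h)) (at x)"
    and grad_cont: "\<And>i. i < m \<Longrightarrow> continuous_on UNIV (grad i)"
    and m_pos: "m > 0"
    and alpha_pos: "\<alpha> > 0"
    and t0_pos: "t0 > 0"
    and ac_u: "\<And>b. b \<ge> t0 \<Longrightarrow> abs_continuous_on t0 b u"
    and ac_v: "\<And>b. b \<ge> t0 \<Longrightarrow> abs_continuous_on t0 b v"
    and incl: "AE t in lborel. t > t0 \<longrightarrow>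
                 (u has_vector_derivative v t) (at t) \<and>
                 (\<exists>w. (v has_vector_derivative w) (at t) \<and> w \<in> Gsecond \<alpha> m grad t (u t) (v t))"
    and init: "u t0 = x0" "v t0 = v0"
  shows "(AE t in lborel. t \<ge> t0 \<longrightarrow>
            (u has_vector_derivative v t) (at t) \<and>
            (\<exists>w. (v has_vector_derivative w) (at t) \<and>
                 (\<alpha> / t) *\<^sub>R v t + proj ((\<lambda>c. c + w) ` Cset m grad (u t)) 0 = 0))
         \<and> u t0 = x0 \<and> v t0 = v0"
  proof -
  have A: "AE t in lborel. t \<noteq> t0" by (rule AE_lborel_singleton)
  have "AE t in lborel. t \<ge> t0 \<longrightarrow>
            (u has_vector_derivative v t) (at t) \<and>
            (\<exists>w. (v has_vector_derivative w) (at t) \<and>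
                 (\<alpha> / t) *\<^sub>R v t + proj ((\<lambda>c. c + w) ` Cset m grad (u t)) 0 = 0)"
    using incl A
  proof eventually_elim
    case (elim t)
    show ?case
    proof
      assume "t \<ge> t0"
      hence tt: "t > t0" using elim(2) by simp
      then obtain w where w: "(v has_vector_derivative w) (at t)" "w \<in> Gsecond \<alpha> m grad t (u t) (v t)"
        and ud: "(u has_vector_derivative v t) (at t)" using elim(1) by blast
      from w(2) obtain g where g: "g \<in> Cset m grad (u t)"
        "\<forall>h\<in>Cset m grad (u t). inner g (- v t) \<le> inner h (- v t)"
        and wg: "w = - (\<alpha> / t) *\<^sub>R v t - g"
        unfolding Gsecond_def argmin_set_def by auto
      have cpos: "\<alpha> / t > 0" using alpha_pos tt t0_pos by simp
      have "(\<alpha> / t) *\<^sub>R v t + proj ((\<lambda>c. c + w) ` Cset m grad (u t)) 0 = 0"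
        using proj_key[OF cpos g(1) g(2)] wg by simp
      thus "(u has_vector_derivative v t) (at t) \<and>
            (\<exists>w. (v has_vector_derivative w) (at t) \<and>
                 (\<alpha> / t) *\<^sub>R v t + proj ((\<lambda>c. c + w) ` Cset m grad (u t)) 0 = 0)"
        using ud w(1) by blast
    qed
  qed
  thus ?thesis using init by simp
qed

end
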